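(* Let $\Theta=\Theta^1\times\cdots\times\Theta^k\subseteq\mathbb{R}^p$ be a Cartesian product of convex sets, and let $f:\mathbb{R}^p\to\mathbb{R}$ be continuous and bounded below, such that for all $\theta,\theta'\in\Theta$ the directional derivative $\nabla f(\theta,\theta'-\theta)$ exists. Consider the randomized block coordinate scheme: given $\theta_0\in\Theta$, for $n\ge1$ choose a separable surrogate $g_n(\theta)=\sum_{i=1}^k g_n^i(\theta^i)$ of $f$, pick an index $\hat\imath_n\in\{1,\dots,k\}$ uniformly at random (independently), set $\theta_n^{\hat\imath_n}\in\operatorname{arg\,min}_{\theta^{\hat\imath_n}\in\Theta^{\hat\imath_n}}g_n^{\hat\imath_n}(\theta^{\hat\imath_n})$ and $\theta_n^i=\theta_{n-1}^i$ for $i\ne\hat\imath_n$. Assume that each $g_n$ is a majorant function in $\mathcal{S}_L(f,\theta_{n-1})$, and that $\theta_0$ is a minimizer over $\Theta$ of some separable majorant function in $\mathcal{S}_L(f,\theta_{-1})$ for some $\theta_{-1}\in\Theta$. Then, with probability one, $(f(\theta_n))_{n\ge0}$ is monotonically non-increasing and $$\liminf_{n\to+\infty}\ \inf_{\theta\in\Theta\setminus\{\theta_n\}}\frac{\nabla f(\theta_n,\theta-\theta_n)}{\|\theta-\theta_n\|_2}\ \ge 0.$$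
   Context: $\theta=(\theta^1,\dots,\theta^k)$ with $\theta^i\in\Theta^i$. Directional derivative: $\nabla f(\theta,\theta'-\theta)\triangleq\lim_{t\to0^+}\frac{f(\theta+t(\theta'-\theta))-f(\theta)}{t}$. First-order surrogates: $g:\mathbb{R}^p\to\mathbb{R}$ belongs to $\mathcal{S}_L(f,\kappa)$ if (a) $g(\theta')\ge f(\theta')$ for all $\theta'\in\operatorname{arg\,min}_{\theta\in\Theta}g(\theta)$, and (b) $h\triangleq g-f$ is differentiable with $L$-Lipschitz gradient, $h(\kappa)=0$, $\nabla h(\kappa)=0$. A majorant function satisfies $g\ge f$ everywhere. The minimizers are assumed to exist. *)

theory Defs
  imports "HOL-Probability.Probability"
begin

text \<open>Block structure: the coordinates of a vector in real^'n are partitioned into k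
blocks via blk :: 'n => nat (with range {..<k}); block i of theta is represented
as the vector that keeps the coordinates of block i and zeroes all others.\<close>

definition blk_proj :: "('n::finite \<Rightarrow> nat) \<Rightarrow> nat \<Rightarrow> real^'n \<Rightarrow> real^'n" where
  "blk_proj blk i x = (\<chi> j. if blk j = i then x $ j else 0)"

definition blk_product :: "('n::finite \<Rightarrow> nat) \<Rightarrow> nat \<Rightarrow> (nat \<Rightarrow> (real^'n) set) \<Rightarrow> (real^'n) set" where
  "blk_product blk k T = {x. \<forall>i<k. blk_proj blk i x \<in> T i}"

definition separable :: "('n::finite \<Rightarrow> nat) \<Rightarrow> nat \<Rightarrow> (real^'n \<Rightarrow> real) \<Rightarrow> bool" where
  "separable blk k g \<longleftrightarrow> (\<exists>gi. \<forall>x. g x = (\<Sum>i<k. gi i (blk_proj blk i x)))"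

definition arg_min_set :: "('a \<Rightarrow> real) \<Rightarrow> 'a set \<Rightarrow> 'a set" where
  "arg_min_set g S = {x \<in> S. \<forall>y\<in>S. g x \<le> g y}"

definition dir_deriv_exists :: "('a::real_normed_vector \<Rightarrow> real) \<Rightarrow> 'a \<Rightarrow> 'a \<Rightarrow> bool" where
  "dir_deriv_exists f x d \<longleftrightarrow>
     (\<exists>l. ((\<lambda>t. (f (x + t *\<^sub>R d) - f x) / t) \<longlongrightarrow> l) (at_right 0))"

definition dir_deriv :: "('a::real_normed_vector \<Rightarrow> real) \<Rightarrow> 'a \<Rightarrow> 'a \<Rightarrow> real" where
  "dir_deriv f x d = Lim (at_right 0) (\<lambda>t. (f (x + t *\<^sub>R d) - f x) / t)"

definition majorant :: "('a \<Rightarrow> real) \<Rightarrow> ('a \<Rightarrow> real) \<Rightarrow> bool" where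
  "majorant f g \<longleftrightarrow> (\<forall>x. f x \<le> g x)"

definition first_order_surrogate ::
  "real \<Rightarrow> ('a::euclidean_space \<Rightarrow> real) \<Rightarrow> 'a set \<Rightarrow> 'a \<Rightarrow> ('a \<Rightarrow> real) \<Rightarrow> bool" where
  "first_order_surrogate L f Th \<kappa> g \<longleftrightarrow>
     (\<forall>x\<in>arg_min_set g Th. f x \<le> g x) \<and>
     (\<exists>G. (\<forall>x. ((\<lambda>y. g y - f y) has_derivative (\<lambda>v. G x \<bullet> v)) (at x)) \<and>
          (\<forall>x y. norm (G x - G y) \<le> L * norm (x - y)) \<and>
          g \<kappa> - f \<kappa> = 0 \<and> G \<kappa> = 0)"

end

theory Submission
  imports Defs
begin


lemma lip_taylor:
  fixes h :: "'a::euclidean_space \<Rightarrow> real"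
  assumes hd: "\<And>x. (h has_derivative (\<lambda>v. G x \<bullet> v)) (at x)"
    and lip: "\<And>x y. norm (G x - G y) \<le> L * norm (x - y)"
  shows "\<bar>h y - h x - G x \<bullet> (y - x)\<bar> \<le> L * (norm (y - x))^2"
proof (cases "y = x")
  case True
  have "0 \<le> L * norm (x - x)" using lip[of x x] by simp
  then show ?thesis using True by simp
next
  case False
  define d where "d = y - x"
  have dn: "d \<noteq> 0" using False d_def by simp
  define \<phi> where "\<phi> t = h (x + t *\<^sub>R d) - t * (G x \<bullet> d)" for t
  have der: "DERIV \<phi> t :> (G (x + t *\<^sub>R d) \<bullet> d - G x \<bullet> d)" for t
  proof -
    have a: "((\<lambda>t. x + t *\<^sub>R d) has_derivative (\<lambda>s. s *\<^sub>R d)) (at t)"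
      by (auto intro!: derivative_eq_intros)
    have b: "((\<lambda>t. h (x + t *\<^sub>R d)) has_derivative (\<lambda>s. G (x + t *\<^sub>R d) \<bullet> (s *\<^sub>R d))) (at t)"
      using has_derivative_compose[OF a hd] by simp
    have c: "((\<lambda>t. h (x + t *\<^sub>R d)) has_real_derivative (G (x + t *\<^sub>R d) \<bullet> d)) (at t)"
    proof -
      have "(\<lambda>s. G (x + t *\<^sub>R d) \<bullet> (s *\<^sub>R d)) = (*) (G (x + t *\<^sub>R d) \<bullet> d)"
        by (auto simp: fun_eq_iff)
      then show ?thesis unfolding has_field_derivative_def using b by simp
    qed
    show ?thesis unfolding \<phi>_def
      by (auto intro!: derivative_eq_intros c)
  qed
  obtain z where z: "0 < z" "z < 1" "\<phi> 1 - \<phi> 0 = (1 - 0) * (G (x + z *\<^sub>R d) \<bullet> d - G x \<bullet> d)"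
    using MVT2[of 0 1 \<phi> "\<lambda>t. G (x + t *\<^sub>R d) \<bullet> d - G x \<bullet> d"] der by auto
  have "\<bar>G (x + z *\<^sub>R d) \<bullet> d - G x \<bullet> d\<bar> = \<bar>(G (x + z *\<^sub>R d) - G x) \<bullet> d\<bar>"
    by (simp add: inner_diff_left)
  also have "\<dots> \<le> norm (G (x + z *\<^sub>R d) - G x) * norm d"
    by (rule Cauchy_Schwarz_ineq2)
  also have "\<dots> \<le> (L * norm (z *\<^sub>R d)) * norm d"
    using lip[of "x + z *\<^sub>R d" x] by (simp add: mult_right_mono)
  also have "\<dots> = L * z * (norm d)^2" using z by (simp add: power2_eq_square)
  finally have 1: "\<bar>G (x + z *\<^sub>R d) \<bullet> d - G x \<bullet> d\<bar> \<le> L * z * (norm d)^2" .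
  have "0 \<le> L * z * (norm d)^2" using 1 by linarith
  hence L0: "0 \<le> L" using z dn by (simp add: zero_le_mult_iff)
  have "L * z * (norm d)^2 \<le> L * (norm d)^2" using L0 z
    by (simp add: mult.assoc mult_left_mono mult_left_le_one_le)
  moreover have "h y - h x - G x \<bullet> (y - x) = \<phi> 1 - \<phi> 0" unfolding \<phi>_def d_def by simp
  ultimately show ?thesis using z(3) 1 d_def by simp
qed




lemma grad_bound:
  fixes h :: "'a::euclidean_space \<Rightarrow> real"
  assumes tay: "\<And>x y. \<bar>h y - h x - G x \<bullet> (y - x)\<bar> \<le> L * (norm (y - x))^2"
    and L: "L > 0" and hpos: "\<And>x. 0 \<le> h x"
  shows "(norm (G x))^2 \<le> 4 * L * h x"
proof -
  define y where "y = x - (1 / (2*L)) *\<^sub>R G x"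
  have yx: "y - x = - ((1 / (2*L)) *\<^sub>R G x)" unfolding y_def by simp
  have i: "G x \<bullet> (y - x) = -((norm (G x))^2) / (2*L)"
    unfolding yx by (simp add: power2_norm_eq_inner)
  have n: "(norm (y - x))^2 = (norm (G x))^2 / (4*L^2)"
    unfolding yx using L by (simp add: power2_eq_square field_simps)
  have "h y \<le> h x + G x \<bullet> (y - x) + L * (norm (y - x))^2" using tay[where x=x and y=y] by linarith
  also have "\<dots> = h x - (norm (G x))^2 / (4*L)"
    unfolding i n using L by (simp add: field_simps power2_eq_square)
  finally have "0 \<le> h x - (norm (G x))^2 / (4*L)" using hpos[of y] by linarith
  then show ?thesis using L by (simp add: field_simps)
qed

lemma norm_blk_proj_le: "norm (blk_proj blk i x) \<le> norm x"
  unfolding norm_vec_def blk_proj_def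
  by (rule L2_set_mono) auto

lemma blk_proj_add: "blk_proj blk i (x + y) = blk_proj blk i x + blk_proj blk i y"
  unfolding blk_proj_def by (auto simp: vec_eq_iff)
lemma blk_proj_diff: "blk_proj blk i (x - y) = blk_proj blk i x - blk_proj blk i y"
  unfolding blk_proj_def by (auto simp: vec_eq_iff)
lemma blk_proj_scaleR: "blk_proj blk i (c *\<^sub>R x) = c *\<^sub>R blk_proj blk i x"
  unfolding blk_proj_def by (auto simp: vec_eq_iff)
lemma blk_proj_proj: "blk_proj blk i (blk_proj blk j x) = (if i = j then blk_proj blk j x else 0)"
  unfolding blk_proj_def by (auto simp: vec_eq_iff)

lemma blk_proj_sum:
  assumes "range blk = {..<k}"
  shows "(\<Sum>i<k. blk_proj blk i x) = x"
proof -
  have "(\<Sum>i<k. blk_proj blk i x) $ j = x $ j" for j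
  proof -
    have "blk j < k" using assms by auto
    have "(\<Sum>i<k. blk_proj blk i x) $ j = (\<Sum>i<k. (if blk j = i then x $ j else 0))"
      unfolding blk_proj_def by (simp add: sum_component)
    also have "\<dots> = x $ j" using \<open>blk j < k\<close> by (simp add: sum.delta)
    finally show ?thesis .
  qed
  then show ?thesis by (simp add: vec_eq_iff)
qed

lemma sep_shift:
  fixes gi :: "nat \<Rightarrow> real^'n::finite \<Rightarrow> real"
  assumes "\<And>i. i \<noteq> c \<Longrightarrow> blk_proj blk i x' = blk_proj blk i x"
    and "\<And>i. i \<noteq> j \<Longrightarrow> blk_proj blk i w = 0" and "j \<noteq> c"
  shows "(\<Sum>i<k. gi i (blk_proj blk i (x' + w))) - (\<Sum>i<k. gi i (blk_proj blk i x'))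
       = (\<Sum>i<k. gi i (blk_proj blk i (x + w))) - (\<Sum>i<k. gi i (blk_proj blk i x))"
proof -
  have "gi i (blk_proj blk i (x' + w)) - gi i (blk_proj blk i x')
      = gi i (blk_proj blk i (x + w)) - gi i (blk_proj blk i x)" for i
  proof (cases "i = j")
    case True
    then show ?thesis using assms by (simp add: blk_proj_add)
  next
    case False
    then show ?thesis using assms(2)[of i] by (simp add: blk_proj_add)
  qed
  then show ?thesis by (simp add: sum_subtractf[symmetric])
qed

lemma sep_split:
  fixes gi :: "nat \<Rightarrow> real^'n::finite \<Rightarrow> real"
  shows
  "(\<Sum>i<k. gi i (blk_proj blk i (x + v))) - (\<Sum>i<k. gi i (blk_proj blk i x))
   = (\<Sum>j<k. (\<Sum>i<k. gi i (blk_proj blk i (x + blk_proj blk j v))) - (\<Sum>i<k. gi i (blk_proj blk i x)))"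
proof -
  have "(\<Sum>i<k. gi i (blk_proj blk i (x + blk_proj blk j v))) - (\<Sum>i<k. gi i (blk_proj blk i x))
     = (if j < k then gi j (blk_proj blk j (x + v)) - gi j (blk_proj blk j x) else 0)" for j
  proof -
    have "(\<Sum>i<k. gi i (blk_proj blk i (x + blk_proj blk j v))) - (\<Sum>i<k. gi i (blk_proj blk i x))
      = (\<Sum>i<k. gi i (blk_proj blk i (x + blk_proj blk j v)) - gi i (blk_proj blk i x))"
      by (rule sum_subtractf[symmetric])
    also have "\<dots> = (\<Sum>i<k. if i = j then gi j (blk_proj blk j (x + v)) - gi j (blk_proj blk j x) else 0)"
      by (rule sum.cong) (auto simp: blk_proj_add blk_proj_proj)
    also have "\<dots> = (if j < k then gi j (blk_proj blk j (x + v)) - gi j (blk_proj blk j x) else 0)"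
      by (simp add: sum.delta)
    finally show ?thesis .
  qed
  then show ?thesis by (simp add: sum_subtractf[symmetric])
qed




lemma surr_props:
  fixes f g :: "'a::euclidean_space \<Rightarrow> real"
  assumes "first_order_surrogate L f S \<kappa> g"
  obtains G where "\<And>x y. \<bar>(g y - f y) - (g x - f x) - G x \<bullet> (y - x)\<bar> \<le> (\<bar>L\<bar>+1) * (norm (y - x))^2"
    and "g \<kappa> - f \<kappa> = 0" "G \<kappa> = 0"
proof -
  obtain G where d: "\<forall>x. ((\<lambda>y. g y - f y) has_derivative (\<lambda>v. G x \<bullet> v)) (at x)"
    and l: "\<forall>x y. norm (G x - G y) \<le> L * norm (x - y)" and t: "g \<kappa> - f \<kappa> = 0" "G \<kappa> = 0"
    using assms unfolding first_order_surrogate_def by blast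
  have l': "norm (G x - G y) \<le> (\<bar>L\<bar>+1) * norm (x - y)" for x y
  proof -
    have "L * norm (x - y) \<le> (\<bar>L\<bar>+1) * norm (x - y)"
      by (intro mult_right_mono) auto
    then show ?thesis using l by (meson order_trans)
  qed
  show ?thesis
    apply (rule that[of G])
    using lip_taylor[where h="\<lambda>y. g y - f y" and G=G, OF d[rule_format] l'] t by auto
qed



locale bcd =

  fixes blk :: "'n::finite \<Rightarrow> nat" and k :: nat
    and Th :: "nat \<Rightarrow> (real^'n) set"
    and f :: "real^'n \<Rightarrow> real" and L :: real
    and M :: "'w measure" and I :: "nat \<Rightarrow> 'w \<Rightarrow> nat"
    and \<theta> :: "nat \<Rightarrow> 'w \<Rightarrow> real^'n" and \<theta>0 :: "real^'n"
    and gs :: "nat \<Rightarrow> 'w \<Rightarrow> nat \<Rightarrow> real^'n \<Rightarrow> real"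
  assumes blocks: "range blk = {..<k}"
    and blocks_sub: "\<forall>i<k. Th i \<subseteq> {x. \<forall>j. blk j \<noteq> i \<longrightarrow> x $ j = 0}"
    and blocks_convex: "\<forall>i<k. convex (Th i)"
    and f_cont: "continuous_on UNIV f"
    and f_bdd: "bdd_below (range f)"
    and f_dd: "\<forall>x\<in>blk_product blk k Th. \<forall>y\<in>blk_product blk k Th. dir_deriv_exists f x (y - x)"
    and P: "prob_space M"
    and I_indep: "prob_space.indep_vars M (\<lambda>_. count_space UNIV) I {1..}"
    and I_range: "\<forall>n\<ge>1. \<forall>\<omega>\<in>space M. I n \<omega> < k"
    and I_unif: "\<forall>n\<ge>1. \<forall>i<k. measure M {\<omega>\<in>space M. I n \<omega> = i} = 1 / real k"
    and init: "\<exists>\<theta>m\<in>blk_product blk k Th. \<exists>g. separable blk k g \<and> majorant f g \<and>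
                 first_order_surrogate L f (blk_product blk k Th) \<theta>m g \<and>
                 \<theta>0 \<in> arg_min_set g (blk_product blk k Th)"
    and start: "\<forall>\<omega>\<in>space M. \<theta> 0 \<omega> = \<theta>0"
    and surr: "\<forall>n\<ge>1. \<forall>\<omega>\<in>space M.
                 majorant f (\<lambda>x. \<Sum>i<k. gs n \<omega> i (blk_proj blk i x)) \<and>
                 first_order_surrogate L f (blk_product blk k Th) (\<theta> (n - 1) \<omega>)
                   (\<lambda>x. \<Sum>i<k. gs n \<omega> i (blk_proj blk i x))"
    and upd_keep: "\<forall>n\<ge>1. \<forall>\<omega>\<in>space M. \<forall>j. blk j \<noteq> I n \<omega> \<longrightarrow> \<theta> n \<omega> $ j = \<theta> (n - 1) \<omega> $ j"
    and upd_min: "\<forall>n\<ge>1. \<forall>\<omega>\<in>space M.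
                 blk_proj blk (I n \<omega>) (\<theta> n \<omega>) \<in> arg_min_set (gs n \<omega> (I n \<omega>)) (Th (I n \<omega>))"
    and gs_adapted: "\<forall>n\<ge>1. \<forall>\<omega>\<in>space M. \<forall>\<omega>'\<in>space M.
                 (\<forall>m\<in>{1..<n}. I m \<omega> = I m \<omega>') \<longrightarrow> gs n \<omega> = gs n \<omega>'"
    and \<theta>_adapted: "\<forall>n. \<forall>\<omega>\<in>space M. \<forall>\<omega>'\<in>space M.
                 (\<forall>m\<in>{1..n}. I m \<omega> = I m \<omega>') \<longrightarrow> \<theta> n \<omega> = \<theta> n \<omega>'"

context bcd begin

sublocale prob_space M by (rule P)

abbreviation "Thp \<equiv> blk_product blk k Th"
abbreviation "Lp \<equiv> \<bar>L\<bar> + 1"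
definition gfun where "gfun n \<omega> x = (\<Sum>i<k. gs n \<omega> i (blk_proj blk i x))"

lemma Lp_pos: "Lp > 0" by simp

lemma mem_Thp: "x \<in> Thp \<longleftrightarrow> (\<forall>i<k. blk_proj blk i x \<in> Th i)"
  unfolding blk_product_def by simp

lemma k_pos: "0 < k"
proof -
  obtain j :: 'n where True by simp
  have "blk j \<in> {..<k}" using blocks by auto
  then show ?thesis by auto
qed

lemma proj_keep:
  assumes "n \<ge> 1" "\<omega> \<in> space M" "i \<noteq> I n \<omega>"
  shows "blk_proj blk i (\<theta> n \<omega>) = blk_proj blk i (\<theta> (n-1) \<omega>)"
  using upd_keep assms unfolding blk_proj_def by (auto simp: vec_eq_iff)

lemma theta0_mem: "\<theta>0 \<in> Thp"
  using init unfolding arg_min_set_def by auto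

lemma theta_mem: "\<omega> \<in> space M \<Longrightarrow> \<theta> n \<omega> \<in> Thp"
proof (induction n)
  case 0
  then show ?case using start theta0_mem by simp
next
  case (Suc n)
  show ?case unfolding mem_Thp
  proof (intro allI impI)
    fix i assume "i < k"
    show "blk_proj blk i (\<theta> (Suc n) \<omega>) \<in> Th i"
    proof (cases "i = I (Suc n) \<omega>")
      case True
      then show ?thesis using upd_min Suc.prems unfolding arg_min_set_def by auto
    next
      case False
      then have "blk_proj blk i (\<theta> (Suc n) \<omega>) = blk_proj blk i (\<theta> n \<omega>)"
        using proj_keep[of "Suc n" \<omega> i] Suc.prems by simp
      then show ?thesis using Suc.IH Suc.prems \<open>i < k\<close> unfolding mem_Thp by simp
    qed
  qed
qed

lemma conv_step:
  assumes "x \<in> Thp" "y \<in> Thp" "0 \<le> s" "s \<le> 1"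
  shows "x + s *\<^sub>R blk_proj blk j (y - x) \<in> Thp"
  unfolding mem_Thp
proof (intro allI impI)
  fix i assume i: "i < k"
  show "blk_proj blk i (x + s *\<^sub>R blk_proj blk j (y - x)) \<in> Th i"
  proof (cases "i = j")
    case True
    have e: "blk_proj blk i (x + s *\<^sub>R blk_proj blk j (y - x))
        = (1 - s) *\<^sub>R blk_proj blk i x + s *\<^sub>R blk_proj blk i y"
      using True by (simp add: blk_proj_add blk_proj_scaleR blk_proj_proj blk_proj_diff algebra_simps)
    have "blk_proj blk i x \<in> Th i" "blk_proj blk i y \<in> Th i" using assms i mem_Thp by auto
    then show ?thesis unfolding e using blocks_convex i assms(3,4)
      by (auto intro: convexD_alt)
  next
    case False
    then show ?thesis using assms i mem_Thp
      by (simp add: blk_proj_add blk_proj_scaleR blk_proj_proj)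
  qed
qed

lemma surr_n:
  assumes "n \<ge> 1" "\<omega> \<in> space M"
  obtains G where "\<And>x y. \<bar>(gfun n \<omega> y - f y) - (gfun n \<omega> x - f x) - G x \<bullet> (y - x)\<bar> \<le> Lp * (norm (y - x))^2"
    and "gfun n \<omega> (\<theta> (n-1) \<omega>) - f (\<theta> (n-1) \<omega>) = 0" "G (\<theta> (n-1) \<omega>) = 0"
    and "\<And>x. f x \<le> gfun n \<omega> x"
proof -
  have s: "first_order_surrogate L f Thp (\<theta> (n - 1) \<omega>) (gfun n \<omega>)"
    and m: "majorant f (gfun n \<omega>)"
    using surr assms unfolding gfun_def[abs_def] by auto
  obtain G where "\<And>x y. \<bar>(gfun n \<omega> y - f y) - (gfun n \<omega> x - f x) - G x \<bullet> (y - x)\<bar> \<le> Lp * (norm (y - x))^2"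
    "gfun n \<omega> (\<theta> (n-1) \<omega>) - f (\<theta> (n-1) \<omega>) = 0" "G (\<theta> (n-1) \<omega>) = 0"
    using surr_props[OF s] by blast
  then show ?thesis using that m unfolding majorant_def by blast
qed

lemma surr_n_ex:
  assumes "n \<ge> 1" "\<omega> \<in> space M"
  shows "\<exists>G. (\<forall>x y. \<bar>(gfun n \<omega> y - f y) - (gfun n \<omega> x - f x) - G x \<bullet> (y - x)\<bar> \<le> Lp * (norm (y - x))^2)
    \<and> G (\<theta> (n-1) \<omega>) = 0"
proof -
  obtain G where "\<And>x y. \<bar>(gfun n \<omega> y - f y) - (gfun n \<omega> x - f x) - G x \<bullet> (y - x)\<bar> \<le> Lp * (norm (y - x))^2"
    "G (\<theta> (n-1) \<omega>) = 0" using surr_n[OF assms] by metis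
  then show ?thesis by blast
qed

lemma majn: "n \<ge> 1 \<Longrightarrow> \<omega> \<in> space M \<Longrightarrow> f x \<le> gfun n \<omega> x"
  using surr unfolding majorant_def gfun_def by auto

lemma tangn: "n \<ge> 1 \<Longrightarrow> \<omega> \<in> space M \<Longrightarrow> gfun n \<omega> (\<theta> (n-1) \<omega>) = f (\<theta> (n-1) \<omega>)"
  using surr unfolding first_order_surrogate_def gfun_def by auto

lemma g_block_min:
  assumes "n \<ge> 1" "\<omega> \<in> space M"
    and "\<And>i. i \<noteq> I n \<omega> \<Longrightarrow> blk_proj blk i z = blk_proj blk i (\<theta> n \<omega>)"
    and "blk_proj blk (I n \<omega>) z \<in> Th (I n \<omega>)"
  shows "gfun n \<omega> (\<theta> n \<omega>) \<le> gfun n \<omega> z"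
  unfolding gfun_def
proof (rule sum_mono)
  fix i assume "i \<in> {..<k}"
  show "gs n \<omega> i (blk_proj blk i (\<theta> n \<omega>)) \<le> gs n \<omega> i (blk_proj blk i z)"
  proof (cases "i = I n \<omega>")
    case True
    then show ?thesis using upd_min assms unfolding arg_min_set_def by auto
  next
    case False
    then show ?thesis using assms(3) by simp
  qed
qed

lemma g_step_le:
  assumes "n \<ge> 1" "\<omega> \<in> space M"
  shows "gfun n \<omega> (\<theta> n \<omega>) \<le> gfun n \<omega> (\<theta> (n-1) \<omega>)"
proof (rule g_block_min[OF assms])
  show "blk_proj blk i (\<theta> (n - 1) \<omega>) = blk_proj blk i (\<theta> n \<omega>)" if "i \<noteq> I n \<omega>" for i
    using proj_keep[OF assms that] by simp
  have "I n \<omega> < k" using I_range assms by auto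
  then show "blk_proj blk (I n \<omega>) (\<theta> (n - 1) \<omega>) \<in> Th (I n \<omega>)"
    using theta_mem[OF assms(2), of "n-1"] mem_Thp by auto
qed

lemma f_step:
  assumes "n \<ge> 1" "\<omega> \<in> space M"
  shows "f (\<theta> n \<omega>) \<le> f (\<theta> (n-1) \<omega>)"
    and "gfun n \<omega> (\<theta> n \<omega>) - f (\<theta> n \<omega>) \<le> f (\<theta> (n-1) \<omega>) - f (\<theta> n \<omega>)"
proof -
  obtain G where "gfun n \<omega> (\<theta> (n-1) \<omega>) - f (\<theta> (n-1) \<omega>) = 0" "\<And>x. f x \<le> gfun n \<omega> x"
    using surr_n[OF assms] by blast
  then show "f (\<theta> n \<omega>) \<le> f (\<theta> (n-1) \<omega>)"
    "gfun n \<omega> (\<theta> n \<omega>) - f (\<theta> n \<omega>) \<le> f (\<theta> (n-1) \<omega>) - f (\<theta> n \<omega>)"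
    using g_step_le[OF assms] by (smt (verit))+
qed

end



lemma h_diff_bound:
  fixes H :: "'a::real_inner \<Rightarrow> real"
  assumes tay: "\<And>x y. \<bar>H y - H x - G x \<bullet> (y - x)\<bar> \<le> c * (norm (y - x))^2"
  shows "\<bar>H (x + v) - H x\<bar> \<le> norm (G x) * norm v + c * (norm v)^2"
proof -
  have "\<bar>H (x + v) - H x - G x \<bullet> v\<bar> \<le> c * (norm v)^2" using tay[where x=x and y="x+v"] by simp
  moreover have "\<bar>G x \<bullet> v\<bar> \<le> norm (G x) * norm v" by (rule Cauchy_Schwarz_ineq2)
  ultimately show ?thesis by linarith
qed

context bcd begin

definition Q where
  "Q j x E \<longleftrightarrow> (\<forall>y\<in>Thp. \<exists>K. \<forall>s. 0 < s \<and> s \<le> 1 \<longrightarrow>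
      - (E * s * norm (blk_proj blk j (y - x))) - K * s^2 \<le> f (x + s *\<^sub>R blk_proj blk j (y - x)) - f x)"

definition eta where "eta n \<omega> = f (\<theta> (n-1) \<omega>) - f (\<theta> n \<omega>)"

lemma eta_nonneg: "n \<ge> 1 \<Longrightarrow> \<omega> \<in> space M \<Longrightarrow> 0 \<le> eta n \<omega>"
  using f_step(1) unfolding eta_def by fastforce

lemma grad_small:
  assumes "n \<ge> 1" "\<omega> \<in> space M"
    and tay: "\<And>x y. \<bar>(gfun n \<omega> y - f y) - (gfun n \<omega> x - f x) - G x \<bullet> (y - x)\<bar> \<le> Lp * (norm (y - x))^2"
    and maj: "\<And>x. f x \<le> gfun n \<omega> x"
  shows "norm (G (\<theta> n \<omega>)) \<le> sqrt (4 * Lp * eta n \<omega>)"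
proof -
  have "(norm (G (\<theta> n \<omega>)))^2 \<le> 4 * Lp * (gfun n \<omega> (\<theta> n \<omega>) - f (\<theta> n \<omega>))"
    by (rule grad_bound[where h="\<lambda>x. gfun n \<omega> x - f x", OF tay Lp_pos]) (use maj in auto)
  also have "\<dots> \<le> 4 * Lp * eta n \<omega>"
    using f_step(2)[OF assms(1,2)] unfolding eta_def by (intro mult_left_mono) auto
  finally show ?thesis by (simp add: real_le_rsqrt)
qed

lemma Q_upd:
  assumes "n \<ge> 1" "\<omega> \<in> space M"
  shows "Q (I n \<omega>) (\<theta> n \<omega>) (sqrt (4 * Lp * eta n \<omega>))"
  unfolding Q_def
proof
  fix y assume y: "y \<in> Thp"
  obtain G where tay: "\<And>x y. \<bar>(gfun n \<omega> y - f y) - (gfun n \<omega> x - f x) - G x \<bullet> (y - x)\<bar> \<le> Lp * (norm (y - x))^2"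
    using surr_n_ex[OF assms] by blast
  have maj: "\<And>x. f x \<le> gfun n \<omega> x" using majn[OF assms] .
  define c where "c = I n \<omega>"
  define xn where "xn = \<theta> n \<omega>"
  define d where "d = blk_proj blk c (y - xn)"
  have gs: "norm (G xn) \<le> sqrt (4 * Lp * eta n \<omega>)" unfolding xn_def by (rule grad_small[OF assms tay maj])
  have ck: "c < k" using I_range assms unfolding c_def by auto
  show "\<exists>K. \<forall>s. 0 < s \<and> s \<le> 1 \<longrightarrow> - (sqrt (4 * Lp * eta n \<omega>) * s * norm (blk_proj blk (I n \<omega>) (y - \<theta> n \<omega>)))
      - K * s^2 \<le> f (\<theta> n \<omega> + s *\<^sub>R blk_proj blk (I n \<omega>) (y - \<theta> n \<omega>)) - f (\<theta> n \<omega>)"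
    unfolding c_def[symmetric] xn_def[symmetric] d_def[symmetric]
  proof (intro exI allI impI)
    fix s :: real assume s: "0 < s \<and> s \<le> 1"
    define z where "z = xn + s *\<^sub>R d"
    have zmem: "z \<in> Thp" unfolding z_def d_def xn_def
      using conv_step[OF theta_mem[OF assms(2)] y] s by auto
    have "gfun n \<omega> xn \<le> gfun n \<omega> z" unfolding xn_def
    proof (rule g_block_min[OF assms])
      show "blk_proj blk i z = blk_proj blk i (\<theta> n \<omega>)" if "i \<noteq> I n \<omega>" for i
        using that unfolding z_def d_def c_def xn_def by (simp add: blk_proj_add blk_proj_scaleR blk_proj_proj)
      show "blk_proj blk (I n \<omega>) z \<in> Th (I n \<omega>)" using zmem ck unfolding c_def mem_Thp by auto
    qed
    moreover have "\<bar>(gfun n \<omega> z - f z) - (gfun n \<omega> xn - f xn)\<bar> \<le> norm (G xn) * norm (s *\<^sub>R d) + Lp * (norm (s *\<^sub>R d))^2"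
      unfolding z_def by (rule h_diff_bound[where H="\<lambda>x. gfun n \<omega> x - f x", OF tay])
    moreover have "norm (G xn) * norm (s *\<^sub>R d) \<le> sqrt (4 * Lp * eta n \<omega>) * s * norm d"
      proof -
      have "norm (G xn) * norm (s *\<^sub>R d) = norm (G xn) * (s * norm d)" using s by simp
      also have "\<dots> \<le> sqrt (4 * Lp * eta n \<omega>) * (s * norm d)"
        using gs s by (intro mult_right_mono) auto
      finally show ?thesis by (simp add: mult.assoc)
    qed
    moreover have "Lp * (norm (s *\<^sub>R d))^2 = (Lp * (norm d)^2) * s^2"
      using s by (simp add: power_mult_distrib)
    ultimately show "- (sqrt (4 * Lp * eta n \<omega>) * s * norm d) - (Lp * (norm d)^2) * s^2 \<le> f z - f xn"
      unfolding z_def by linarith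
  qed
qed

end



lemma dd_lower:
  fixes f :: "'a::real_normed_vector \<Rightarrow> real"
  assumes ex: "dir_deriv_exists f x d"
    and b: "\<forall>s. 0 < s \<and> s \<le> 1 \<longrightarrow> -A * s - K * s^2 \<le> f (x + s *\<^sub>R d) - f x"
  shows "-A \<le> dir_deriv f x d"
proof -
  obtain l where l: "((\<lambda>t. (f (x + t *\<^sub>R d) - f x) / t) \<longlongrightarrow> l) (at_right 0)"
    using ex unfolding dir_deriv_exists_def by blast
  have dl: "dir_deriv f x d = l" unfolding dir_deriv_def using l by (rule tendsto_Lim[rotated]) simp
  have lim2: "((\<lambda>t. -A - K * t) \<longlongrightarrow> -A - K * 0) (at_right 0)"
    by (intro tendsto_intros)
  have ev: "eventually (\<lambda>t. -A - K * t \<le> (f (x + t *\<^sub>R d) - f x) / t) (at_right (0::real))"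
  proof -
    have "eventually (\<lambda>t. 0 < t \<and> t < 1) (at_right (0::real))"
      by (simp add: eventually_at_right_field) (rule exI[of _ 1], auto)
    then show ?thesis
    proof (rule eventually_mono)
      fix t :: real assume t: "0 < t \<and> t < 1"
      then have "-A * t - K * t^2 \<le> f (x + t *\<^sub>R d) - f x" using b by auto
      then have "(-A - K * t) * t \<le> f (x + t *\<^sub>R d) - f x" by (simp add: algebra_simps power2_eq_square)
      then show "-A - K * t \<le> (f (x + t *\<^sub>R d) - f x) / t" using t by (simp add: pos_le_divide_eq)
    qed
  qed
  have "-A - K * 0 \<le> l"
    by (rule tendsto_le[OF _ l lim2 ev]) simp
  then show ?thesis using dl by simp
qed

context bcd begin

lemma Q_keep:
  assumes "n \<ge> 1" "\<omega> \<in> space M" "j \<noteq> I n \<omega>" and q: "Q j (\<theta> (n-1) \<omega>) E"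
  shows "Q j (\<theta> n \<omega>) (E + sqrt (4 * Lp * eta n \<omega>))"
  unfolding Q_def
proof
  fix y assume y: "y \<in> Thp"
  obtain G where tay: "\<And>x y. \<bar>(gfun n \<omega> y - f y) - (gfun n \<omega> x - f x) - G x \<bullet> (y - x)\<bar> \<le> Lp * (norm (y - x))^2"
    and G0: "G (\<theta> (n-1) \<omega>) = 0"
    using surr_n_ex[OF assms(1,2)] by blast
  have maj: "\<And>x. f x \<le> gfun n \<omega> x" using majn[OF assms(1,2)] .
  define xn where "xn = \<theta> n \<omega>"
  define xp where "xp = \<theta> (n-1) \<omega>"
  define d where "d = blk_proj blk j (y - xn)"
  have pj: "blk_proj blk j xn = blk_proj blk j xp"
    using proj_keep[OF assms(1,2,3)] unfolding xn_def xp_def .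
  have d2: "d = blk_proj blk j (y - xp)" unfolding d_def by (simp add: blk_proj_diff pj)
  have gs: "norm (G xn) \<le> sqrt (4 * Lp * eta n \<omega>)" unfolding xn_def by (rule grad_small[OF assms(1,2) tay maj])
  obtain K0 where K0: "\<And>s. 0 < s \<and> s \<le> 1 \<Longrightarrow> - (E * s * norm d) - K0 * s^2 \<le> f (xp + s *\<^sub>R d) - f xp"
    using q y unfolding Q_def d2 xp_def by blast
  let ?h = "\<lambda>x. gfun n \<omega> x - f x"
  show "\<exists>K. \<forall>s. 0 < s \<and> s \<le> 1 \<longrightarrow> - ((E + sqrt (4 * Lp * eta n \<omega>)) * s * norm (blk_proj blk j (y - \<theta> n \<omega>)))
      - K * s^2 \<le> f (\<theta> n \<omega> + s *\<^sub>R blk_proj blk j (y - \<theta> n \<omega>)) - f (\<theta> n \<omega>)"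
    unfolding xn_def[symmetric] d_def[symmetric]
  proof (intro exI allI impI)
    fix s :: real assume s: "0 < s \<and> s \<le> 1"
    define w where "w = s *\<^sub>R d"
    have nw: "norm w = s * norm d" using s unfolding w_def by simp
    have sep: "gfun n \<omega> (xn + w) - gfun n \<omega> xn = gfun n \<omega> (xp + w) - gfun n \<omega> xp"
      unfolding gfun_def
    proof (rule sep_shift[where c="I n \<omega>" and j=j])
      show "blk_proj blk i xn = blk_proj blk i xp" if "i \<noteq> I n \<omega>" for i
        using proj_keep[OF assms(1,2) that] unfolding xn_def xp_def .
      show "blk_proj blk i w = 0" if "i \<noteq> j" for i
        using that unfolding w_def d_def by (simp add: blk_proj_scaleR blk_proj_proj)
      show "j \<noteq> I n \<omega>" by fact
    qed
    have h1: "\<bar>?h (xp + w) - ?h xp\<bar> \<le> norm (G xp) * norm w + Lp * (norm w)^2"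
      by (rule h_diff_bound[where H="?h", OF tay])
    have h2: "\<bar>?h (xn + w) - ?h xn\<bar> \<le> norm (G xn) * norm w + Lp * (norm w)^2"
      by (rule h_diff_bound[where H="?h", OF tay])
    have g0: "G xp = 0" using G0 unfolding xp_def .
    have a: "norm (G xn) * norm w \<le> sqrt (4 * Lp * eta n \<omega>) * s * norm d"
      unfolding nw using gs s by (simp add: mult.assoc mult_right_mono)
    have b: "Lp * (norm w)^2 = (Lp * (norm d)^2) * s^2" unfolding nw by (simp add: power_mult_distrib)
    have c: "- (E * s * norm d) - K0 * s^2 \<le> f (xp + w) - f xp" using K0[OF s] unfolding w_def .
    have "- ((E + sqrt (4 * Lp * eta n \<omega>)) * s * norm d) - (K0 + 2 * (Lp * (norm d)^2)) * s^2
        \<le> f (xn + w) - f xn"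
      using sep h1 h2 g0 a b c by (simp add: algebra_simps)
    then show "- ((E + sqrt (4 * Lp * eta n \<omega>)) * s * norm d) - (K0 + 2 * (Lp * (norm d)^2)) * s^2
        \<le> f (xn + s *\<^sub>R d) - f xn" unfolding w_def .
  qed
qed

lemma Q_init_ex: "\<exists>c\<ge>0. \<forall>j. Q j \<theta>0 c"
proof -
  obtain \<theta>m g where gs: "first_order_surrogate L f Thp \<theta>m g" and am: "\<theta>0 \<in> arg_min_set g Thp"
    using init by blast
  obtain G where tay: "\<And>x y. \<bar>(g y - f y) - (g x - f x) - G x \<bullet> (y - x)\<bar> \<le> Lp * (norm (y - x))^2"
    using surr_props[OF gs] by metis
  let ?h = "\<lambda>x. g x - f x"
  have "Q j \<theta>0 (norm (G \<theta>0))" for j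
    unfolding Q_def
  proof
    fix y assume y: "y \<in> Thp"
    define d where "d = blk_proj blk j (y - \<theta>0)"
    show "\<exists>K. \<forall>s. 0 < s \<and> s \<le> 1 \<longrightarrow> - (norm (G \<theta>0) * s * norm (blk_proj blk j (y - \<theta>0))) - K * s^2
        \<le> f (\<theta>0 + s *\<^sub>R blk_proj blk j (y - \<theta>0)) - f \<theta>0"
      unfolding d_def[symmetric]
    proof (intro exI allI impI)
      fix s :: real assume s: "0 < s \<and> s \<le> 1"
      define w where "w = s *\<^sub>R d"
      have nw: "norm w = s * norm d" using s unfolding w_def by simp
      have "\<theta>0 + w \<in> Thp" unfolding w_def d_def using conv_step[OF theta0_mem y] s by auto
      then have gm: "g \<theta>0 \<le> g (\<theta>0 + w)" using am unfolding arg_min_set_def by auto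
      have h1: "\<bar>?h (\<theta>0 + w) - ?h \<theta>0\<bar> \<le> norm (G \<theta>0) * norm w + Lp * (norm w)^2"
        by (rule h_diff_bound[where H="?h", OF tay])
      have a: "norm (G \<theta>0) * norm w = norm (G \<theta>0) * s * norm d" unfolding nw by simp
      have b: "Lp * (norm w)^2 = (Lp * (norm d)^2) * s^2" unfolding nw by (simp add: power_mult_distrib)
      have "- (norm (G \<theta>0) * s * norm d) - (Lp * (norm d)^2) * s^2 \<le> f (\<theta>0 + w) - f \<theta>0"
        using gm h1 a b by linarith
      then show "- (norm (G \<theta>0) * s * norm d) - (Lp * (norm d)^2) * s^2 \<le> f (\<theta>0 + s *\<^sub>R d) - f \<theta>0"
        unfolding w_def .
    qed
  qed
  then show ?thesis by (intro exI[of _ "norm (G \<theta>0)"]) auto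
qed

definition c0 where "c0 = (SOME c. c \<ge> 0 \<and> (\<forall>j. Q j \<theta>0 c))"

lemma c0: "c0 \<ge> 0" "Q j \<theta>0 c0"
  using someI_ex[OF Q_init_ex] unfolding c0_def by auto

primrec Z :: "nat \<Rightarrow> nat \<Rightarrow> 'w \<Rightarrow> real" where
  "Z j 0 \<omega> = c0"
| "Z j (Suc n) \<omega> = (if I (Suc n) \<omega> = j then sqrt (4 * Lp * eta (Suc n) \<omega>)
                      else Z j n \<omega> + sqrt (4 * Lp * eta (Suc n) \<omega>))"

lemma Z_nonneg: "\<omega> \<in> space M \<Longrightarrow> 0 \<le> Z j n \<omega>"
  by (induction n) (auto simp: c0 eta_nonneg)

lemma Q_Z: "\<omega> \<in> space M \<Longrightarrow> Q j (\<theta> n \<omega>) (Z j n \<omega>)"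
proof (induction n)
  case 0
  then show ?case using start c0 by simp
next
  case (Suc n)
  show ?case
  proof (cases "I (Suc n) \<omega> = j")
    case True
    then show ?thesis using Q_upd[of "Suc n" \<omega>] Suc.prems by simp
  next
    case False
    then show ?thesis using Q_keep[of "Suc n" \<omega> j "Z j n \<omega>"] Suc by simp
  qed
qed

end



context bcd begin

lemma dd_bound:
  assumes om: "\<omega> \<in> space M" and y: "y \<in> Thp"
  shows "-(\<Sum>j<k. Z j n \<omega>) * norm (y - \<theta> n \<omega>) \<le> dir_deriv f (\<theta> n \<omega>) (y - \<theta> n \<omega>)"
proof -
  define x where "x = \<theta> n \<omega>"
  define d where "d = y - x"
  have s1: "Suc n \<ge> 1" by simp
  obtain G where tay: "\<And>x y. \<bar>(gfun (Suc n) \<omega> y - f y) - (gfun (Suc n) \<omega> x - f x) - G x \<bullet> (y - x)\<bar> \<le> Lp * (norm (y - x))^2"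
    and G0: "G x = 0"
    using surr_n_ex[OF s1 om] unfolding x_def by auto
  let ?g = "gfun (Suc n) \<omega>"
  let ?h = "\<lambda>z. ?g z - f z"
  have hb: "\<bar>?h (x + v) - ?h x\<bar> \<le> Lp * (norm v)^2" for v
    using h_diff_bound[where H="?h", OF tay, of x v] G0 by simp
  have "\<forall>j\<in>{..<k}. \<exists>K. \<forall>s. 0 < s \<and> s \<le> 1 \<longrightarrow>
      - (Z j n \<omega> * s * norm (blk_proj blk j d)) - K * s^2 \<le> f (x + s *\<^sub>R blk_proj blk j d) - f x"
    using Q_Z[OF om] y unfolding Q_def x_def d_def by blast
  then obtain Kf where Kf: "\<And>j s. j < k \<Longrightarrow> 0 < s \<and> s \<le> 1 \<Longrightarrow>
      - (Z j n \<omega> * s * norm (blk_proj blk j d)) - Kf j * s^2 \<le> f (x + s *\<^sub>R blk_proj blk j d) - f x"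
    by (metis bchoice lessThan_iff)
  define S where "S = (\<Sum>j<k. Z j n \<omega>)"
  define K where "K = (\<Sum>j<k. Kf j) + real k * (Lp * (norm d)^2) + Lp * (norm d)^2"
  have main: "\<forall>s. 0 < s \<and> s \<le> 1 \<longrightarrow> -(S * norm d) * s - K * s^2 \<le> f (x + s *\<^sub>R d) - f x"
  proof (intro allI impI)
    fix s :: real assume s: "0 < s \<and> s \<le> 1"
    have split: "?g (x + s *\<^sub>R d) - ?g x = (\<Sum>j<k. ?g (x + s *\<^sub>R blk_proj blk j d) - ?g x)"
      unfolding gfun_def using sep_split[where gi="gs (Suc n) \<omega>" and k=k and blk=blk and x=x and v="s *\<^sub>R d"]
      by (simp add: blk_proj_scaleR)
    have eq: "f (x + s *\<^sub>R d) - f x = (\<Sum>j<k. f (x + s *\<^sub>R blk_proj blk j d) - f x)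
        + (\<Sum>j<k. ?h (x + s *\<^sub>R blk_proj blk j d) - ?h x) - (?h (x + s *\<^sub>R d) - ?h x)"
      using split by (simp add: sum.distrib[symmetric] algebra_simps)
    have t1: "f (x + s *\<^sub>R blk_proj blk j d) - f x \<ge> - (Z j n \<omega> * s * norm d) - Kf j * s^2" if "j < k" for j
    proof -
      have "Z j n \<omega> * s * norm (blk_proj blk j d) \<le> Z j n \<omega> * s * norm d"
        using Z_nonneg[OF om] s norm_blk_proj_le by (intro mult_left_mono) auto
      then show ?thesis using Kf[OF that s] by linarith
    qed
    have t2: "?h (x + s *\<^sub>R blk_proj blk j d) - ?h x \<ge> - (Lp * (norm d)^2 * s^2)" for j
    proof -
      have "(norm (s *\<^sub>R blk_proj blk j d))^2 \<le> s^2 * (norm d)^2"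
        using s norm_blk_proj_le[of blk j d] by (simp add: power_mult_distrib power_mono)
      then have "Lp * (norm (s *\<^sub>R blk_proj blk j d))^2 \<le> Lp * (norm d)^2 * s^2"
        using Lp_pos by (simp add: mult_left_mono mult.commute)
      then show ?thesis using hb[of "s *\<^sub>R blk_proj blk j d"] by linarith
    qed
    have t3: "?h (x + s *\<^sub>R d) - ?h x \<le> Lp * (norm d)^2 * s^2"
      using hb[of "s *\<^sub>R d"] s by (simp add: power_mult_distrib mult_ac)
    have "(\<Sum>j<k. f (x + s *\<^sub>R blk_proj blk j d) - f x) \<ge> (\<Sum>j<k. - (Z j n \<omega> * s * norm d) - Kf j * s^2)"
      by (rule sum_mono) (use t1 in auto)
    also have "(\<Sum>j<k. - (Z j n \<omega> * s * norm d) - Kf j * s^2) = -(S * norm d) * s - (\<Sum>j<k. Kf j) * s^2"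
      unfolding S_def by (simp add: sum_subtractf sum_distrib_right sum_distrib_left sum_negf algebra_simps)
    finally have A: "(\<Sum>j<k. f (x + s *\<^sub>R blk_proj blk j d) - f x) \<ge> -(S * norm d) * s - (\<Sum>j<k. Kf j) * s^2" .
    have "(\<Sum>j<k. ?h (x + s *\<^sub>R blk_proj blk j d) - ?h x) \<ge> (\<Sum>j<k. - (Lp * (norm d)^2 * s^2))"
      by (rule sum_mono) (use t2 in auto)
    then have B: "(\<Sum>j<k. ?h (x + s *\<^sub>R blk_proj blk j d) - ?h x) \<ge> - (real k * (Lp * (norm d)^2) * s^2)"
      by simp
    show "-(S * norm d) * s - K * s^2 \<le> f (x + s *\<^sub>R d) - f x"
      unfolding eq K_def using A B t3 by (simp add: algebra_simps)
  qed
  have "-(S * norm d) \<le> dir_deriv f x d"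
    by (rule dd_lower[OF _ main]) (use f_dd theta_mem[OF om] y in \<open>auto simp: x_def d_def\<close>)
  then show ?thesis unfolding S_def x_def d_def by simp
qed

end



context bcd begin

definition H where "H n \<omega> = map (\<lambda>m. I m \<omega>) [1..<Suc n]"
definition V where "V n = {xs. set xs \<subseteq> {..<k} \<and> length xs = n}"
definition detn where "detn n X \<longleftrightarrow> (\<forall>\<omega>\<in>space M. \<forall>\<omega>'\<in>space M. H n \<omega> = H n \<omega>' \<longrightarrow> X \<omega> = X \<omega>')"
definition rep where "rep v = (SOME \<omega>. \<omega> \<in> space M \<and> H (length v) \<omega> = v)"
definition avg where "avg n X = (\<Sum>v\<in>V n. X (rep v)) / real k ^ n"

lemma H_Suc: "H (Suc n) \<omega> = H n \<omega> @ [I (Suc n) \<omega>]"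
  unfolding H_def by simp

lemma H_len: "length (H n \<omega>) = n"
  unfolding H_def by simp

lemma H_nth: "i < n \<Longrightarrow> H n \<omega> ! i = I (Suc i) \<omega>"
  unfolding H_def using nth_map[of i "[1..<Suc n]" "\<lambda>m. I m \<omega>"] nth_upt[of 1 i "Suc n"] by (simp del: upt_Suc)

lemma H_V: "\<omega> \<in> space M \<Longrightarrow> H n \<omega> \<in> V n"
  unfolding V_def H_def using I_range by auto

lemma H_eq_iff: "H n \<omega> = H n \<omega>' \<longleftrightarrow> (\<forall>m\<in>{1..n}. I m \<omega> = I m \<omega>')"
proof
  assume e: "H n \<omega> = H n \<omega>'"
  show "\<forall>m\<in>{1..n}. I m \<omega> = I m \<omega>'"
  proof
    fix m assume m: "m \<in> {1..n}"
    then have a: "m - 1 < n" "Suc (m - 1) = m" by auto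
    show "I m \<omega> = I m \<omega>'" using H_nth[OF a(1), of \<omega>] H_nth[OF a(1), of \<omega>'] e a(2) by simp
  qed
next
  assume a: "\<forall>m\<in>{1..n}. I m \<omega> = I m \<omega>'"
  show "H n \<omega> = H n \<omega>'"
    by (rule nth_equalityI) (auto simp: H_len H_nth a)
qed

lemma finite_V: "finite (V n)"
  unfolding V_def by (rule finite_lists_length_eq) simp

lemma card_V: "card (V n) = k ^ n"
  unfolding V_def using card_lists_length_eq[of "{..<k}" n] by simp

lemma V_Suc: "V (Suc n) = (\<lambda>(u,i). u @ [i]) ` (V n \<times> {..<k})"
proof
  show "V (Suc n) \<subseteq> (\<lambda>(u,i). u @ [i]) ` (V n \<times> {..<k})"
  proof
    fix v assume v: "v \<in> V (Suc n)"
    then have "v \<noteq> []" unfolding V_def by auto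
    then have "v = butlast v @ [last v]" by simp
    moreover have "butlast v \<in> V n" using v unfolding V_def by (auto dest: in_set_butlastD)
    moreover have "last v \<in> set v" using \<open>v \<noteq> []\<close> by simp
    then have "last v < k" using v unfolding V_def by auto
    ultimately show "v \<in> (\<lambda>(u,i). u @ [i]) ` (V n \<times> {..<k})" by force
  qed
  show "(\<lambda>(u,i). u @ [i]) ` (V n \<times> {..<k}) \<subseteq> V (Suc n)"
    unfolding V_def by auto
qed

lemma V_sum: "(\<Sum>v\<in>V (Suc n). F v) = (\<Sum>u\<in>V n. \<Sum>i<k. F (u @ [i]))"
proof -
  have inj: "inj_on (\<lambda>(u,i). u @ [i]) (V n \<times> {..<k})"
    by (auto simp: inj_on_def)
  have "(\<Sum>v\<in>V (Suc n). F v) = (\<Sum>p\<in>V n \<times> {..<k}. F ((\<lambda>(u,i). u @ [i]) p))"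
    unfolding V_Suc by (rule sum.reindex[OF inj, unfolded comp_def])
  also have "\<dots> = (\<Sum>u\<in>V n. \<Sum>i<k. F (u @ [i]))"
    by (simp add: sum.cartesian_product split_def)
  finally show ?thesis .
qed

lemma meas_I: "m \<ge> 1 \<Longrightarrow> I m \<in> measurable M (count_space UNIV)"
  using I_indep unfolding indep_vars_def2 by auto

lemma indep_I: "indep_sets (\<lambda>i. {I i -` A \<inter> space M |A. A \<in> sets (count_space UNIV)}) {1..}"
  using I_indep unfolding indep_vars_def2 by auto

lemma ev_H_eq:
  assumes "length v = n"
  shows "{\<omega>\<in>space M. H n \<omega> = v} = space M \<inter> (\<Inter>m\<in>{1..n}. I m -` {v ! (m-1)} \<inter> space M)"
proof -
  have "H n \<omega> = v \<longleftrightarrow> (\<forall>m\<in>{1..n}. I m \<omega> = v ! (m-1))" for \<omega>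
  proof
    assume e: "H n \<omega> = v"
    show "\<forall>m\<in>{1..n}. I m \<omega> = v ! (m-1)"
    proof
      fix m assume m: "m \<in> {1..n}"
      then have a: "m - 1 < n" "Suc (m - 1) = m" by auto
      show "I m \<omega> = v ! (m-1)" using H_nth[OF a(1), of \<omega>] e a(2) by simp
    qed
  next
    assume a: "\<forall>m\<in>{1..n}. I m \<omega> = v ! (m-1)"
    show "H n \<omega> = v"
      by (rule nth_equalityI) (auto simp: H_len H_nth a assms)
  qed
  then show ?thesis by auto
qed

lemma ev_H_sets: "{\<omega>\<in>space M. H n \<omega> = v} \<in> sets M"
proof (cases "length v = n")
  case True
  show ?thesis
  proof (cases "n = 0")
    case True
    then show ?thesis using \<open>length v = n\<close> unfolding H_def by simp
  next
    case False
    have "(\<Inter>m\<in>{1..n}. I m -` {v ! (m-1)} \<inter> space M) \<in> sets M"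
      using False by (intro sets.finite_INT) (auto intro: measurable_sets[OF meas_I])
    then show ?thesis unfolding ev_H_eq[OF True] by auto
  qed
next
  case False
  then have e: "{\<omega>\<in>space M. H n \<omega> = v} = {}" using H_len by auto
  show ?thesis unfolding e by (rule sets.empty_sets)
qed

lemma prob_H:
  assumes v: "v \<in> V n"
  shows "prob {\<omega>\<in>space M. H n \<omega> = v} = (1 / real k) ^ n"
proof (cases "n = 0")
  case True
  then show ?thesis using v unfolding V_def H_def by (simp add: prob_space)
next
  case False
  have len: "length v = n" using v unfolding V_def by auto
  define A where "A m = I m -` {v ! (m-1)} \<inter> space M" for m
  have e: "{\<omega>\<in>space M. H n \<omega> = v} = (\<Inter>m\<in>{1..n}. A m)"
    unfolding ev_H_eq[OF len] A_def using False by auto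
  have "prob (\<Inter>m\<in>{1..n}. A m) = (\<Prod>m\<in>{1..n}. prob (A m))"
    by (rule indep_setsD[OF indep_I]) (use False in \<open>auto simp: A_def\<close>)
  also have "\<dots> = (\<Prod>m\<in>{1..n}. 1 / real k)"
  proof (rule prod.cong)
    fix m assume m: "m \<in> {1..n}"
    have "v ! (m-1) < k" using v m unfolding V_def by (auto simp: subset_iff)
    moreover have "A m = {\<omega>\<in>space M. I m \<omega> = v ! (m-1)}" unfolding A_def by auto
    ultimately show "prob (A m) = 1 / real k" using I_unif m by auto
  qed simp
  also have "\<dots> = (1 / real k) ^ n" by simp
  finally show ?thesis using e by simp
qed

lemma rep_props:
  assumes v: "v \<in> V n"
  shows "rep v \<in> space M" "H n (rep v) = v"
proof -
  have len: "length v = n" using v unfolding V_def by auto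
  have "prob {\<omega>\<in>space M. H n \<omega> = v} > 0" using prob_H[OF v] k_pos by simp
  then have "{\<omega>\<in>space M. H n \<omega> = v} \<noteq> {}" by (metis measure_empty less_irrefl)
  then have "\<exists>\<omega>. \<omega> \<in> space M \<and> H (length v) \<omega> = v" using len by auto
  from someI_ex[OF this] show "rep v \<in> space M" "H n (rep v) = v" unfolding rep_def len by auto
qed

lemma rep_snoc:
  assumes "u \<in> V n" "i < k"
  shows "rep (u @ [i]) \<in> space M" "H n (rep (u @ [i])) = u" "I (Suc n) (rep (u @ [i])) = i"
proof -
  have uv: "u @ [i] \<in> V (Suc n)" using assms unfolding V_def by auto
  show "rep (u @ [i]) \<in> space M" using rep_props[OF uv] by simp
  have "H (Suc n) (rep (u @ [i])) = u @ [i]" using rep_props[OF uv] by simp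
  then show "H n (rep (u @ [i])) = u" "I (Suc n) (rep (u @ [i])) = i" unfolding H_Suc by auto
qed

lemma det_rep: "detn n X \<Longrightarrow> \<omega> \<in> space M \<Longrightarrow> X (rep (H n \<omega>)) = X \<omega>"
  unfolding detn_def using rep_props[OF H_V] by blast

lemma avg_cong: "(\<And>\<omega>. \<omega> \<in> space M \<Longrightarrow> X \<omega> = Y \<omega>) \<Longrightarrow> avg n X = avg n Y"
  unfolding avg_def using rep_props by (auto intro!: sum.cong)

lemma avg_mono: "(\<And>\<omega>. \<omega> \<in> space M \<Longrightarrow> X \<omega> \<le> Y \<omega>) \<Longrightarrow> avg n X \<le> avg n Y"
  unfolding avg_def using rep_props k_pos
  by (auto intro!: divide_right_mono sum_mono)

lemma avg_add: "avg n (\<lambda>\<omega>. X \<omega> + Y \<omega>) = avg n X + avg n Y"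
  unfolding avg_def by (simp add: sum.distrib add_divide_distrib)

lemma avg_diff: "avg n (\<lambda>\<omega>. X \<omega> - Y \<omega>) = avg n X - avg n Y"
  unfolding avg_def by (simp add: sum_subtractf diff_divide_distrib)

lemma avg_cmult: "avg n (\<lambda>\<omega>. c * X \<omega>) = c * avg n X"
  unfolding avg_def by (simp add: sum_distrib_left)

lemma avg_const: "avg n (\<lambda>\<omega>. c) = c"
  unfolding avg_def using card_V k_pos by simp

lemma avg_Suc:
  assumes "detn n X"
  shows "avg (Suc n) X = avg n X"
proof -
  have "(\<Sum>v\<in>V (Suc n). X (rep v)) = (\<Sum>u\<in>V n. \<Sum>i<k. X (rep (u @ [i])))" by (rule V_sum)
  also have "\<dots> = (\<Sum>u\<in>V n. \<Sum>i<k. X (rep u))"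
  proof (intro sum.cong refl)
    fix u i assume u: "u \<in> V n" and i: "i \<in> {..<k}"
    then have a: "rep (u @ [i]) \<in> space M" "H n (rep (u @ [i])) = u" using rep_snoc[of u n i] by auto
    have b: "rep u \<in> space M" "H n (rep u) = u" using rep_props[OF u] by auto
    show "X (rep (u @ [i])) = X (rep u)"
      by (rule assms[unfolded detn_def, rule_format]) (use a b in auto)
  qed
  also have "\<dots> = real k * (\<Sum>u\<in>V n. X (rep u))" by (simp add: sum_distrib_left)
  finally show ?thesis unfolding avg_def using k_pos by simp
qed

lemma avg_Suc_sel:
  assumes "detn n X" "j < k"
  shows "avg (Suc n) (\<lambda>\<omega>. if I (Suc n) \<omega> = j then 0 else X \<omega>) = (real k - 1) / real k * avg n X"
proof -
  have "(\<Sum>v\<in>V (Suc n). (\<lambda>\<omega>. if I (Suc n) \<omega> = j then 0 else X \<omega>) (rep v))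
      = (\<Sum>u\<in>V n. \<Sum>i<k. (if i = j then 0 else X (rep u)))"
    unfolding V_sum
  proof (intro sum.cong refl)
    fix u i assume u: "u \<in> V n" and i: "i \<in> {..<k}"
    then have a: "rep (u @ [i]) \<in> space M" "H n (rep (u @ [i])) = u" "I (Suc n) (rep (u @ [i])) = i"
      using rep_snoc[of u n i] by auto
    have b: "rep u \<in> space M" "H n (rep u) = u" using rep_props[OF u] by auto
    have "X (rep (u @ [i])) = X (rep u)"
      by (rule assms(1)[unfolded detn_def, rule_format]) (use a b in auto)
    then show "(if I (Suc n) (rep (u @ [i])) = j then 0 else X (rep (u @ [i]))) = (if i = j then 0 else X (rep u))"
      using a(3) by simp
  qed
  also have "\<dots> = (\<Sum>u\<in>V n. (real k - 1) * X (rep u))"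
  proof (rule sum.cong[OF refl])
    fix u
    have "(\<Sum>i<k. (if i = j then 0 else X (rep u))) = (\<Sum>i\<in>{..<k} - {j}. X (rep u))"
      by (rule sum.mono_neutral_cong_right) auto
    also have "\<dots> = (real k - 1) * X (rep u)" using assms(2) by (simp add: of_nat_diff)
    finally show "(\<Sum>i<k. (if i = j then 0 else X (rep u))) = (real k - 1) * X (rep u)" .
  qed
  also have "\<dots> = (real k - 1) * (\<Sum>u\<in>V n. X (rep u))" by (simp add: sum_distrib_left)
  finally show ?thesis unfolding avg_def using k_pos by (simp add: field_simps)
qed

lemma det_repr:
  fixes X :: "'w \<Rightarrow> real"
  assumes "detn n X" "\<omega> \<in> space M"
  shows "X \<omega> = (\<Sum>v\<in>V n. X (rep v) * indicator {\<omega>\<in>space M. H n \<omega> = v} \<omega>)"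
proof -
  have "(\<Sum>v\<in>V n. X (rep v) * indicator {\<omega>\<in>space M. H n \<omega> = v} \<omega>)
      = (\<Sum>v\<in>V n. if v = H n \<omega> then X (rep (H n \<omega>)) else 0)"
    by (rule sum.cong) (use assms(2) in \<open>auto simp: indicator_def\<close>)
  also have "\<dots> = X (rep (H n \<omega>))" using H_V[OF assms(2)] finite_V by (simp add: sum.delta')
  finally show ?thesis using det_rep[OF assms] by simp
qed

lemma det_meas:
  fixes X :: "'w \<Rightarrow> real"
  assumes "detn n X"
  shows "X \<in> borel_measurable M"
proof -
  have "(\<lambda>\<omega>. \<Sum>v\<in>V n. X (rep v) * indicator {\<omega>\<in>space M. H n \<omega> = v} \<omega>) \<in> borel_measurable M"
    using ev_H_sets by (intro borel_measurable_sum borel_measurable_times borel_measurable_const borel_measurable_indicator) auto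
  then show ?thesis
    by (rule measurable_cong[THEN iffD1, rotated]) (use det_repr[OF assms] in auto)
qed

lemma det_nn:
  fixes X :: "'w \<Rightarrow> real"
  assumes "detn n X" "\<And>\<omega>. \<omega> \<in> space M \<Longrightarrow> 0 \<le> X \<omega>"
  shows "(\<integral>\<^sup>+\<omega>. ennreal (X \<omega>) \<partial>M) = ennreal (avg n X)"
proof -
  have nn: "0 \<le> X (rep v)" if "v \<in> V n" for v using assms(2) rep_props[OF that] by auto
  have "(\<integral>\<^sup>+\<omega>. ennreal (X \<omega>) \<partial>M)
      = (\<integral>\<^sup>+\<omega>. (\<Sum>v\<in>V n. ennreal (X (rep v)) * indicator {\<omega>\<in>space M. H n \<omega> = v} \<omega>) \<partial>M)"
  proof (rule nn_integral_cong)
    fix \<omega> assume om: "\<omega> \<in> space M"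
    have "ennreal (X \<omega>) = ennreal (\<Sum>v\<in>V n. X (rep v) * indicator {\<omega>\<in>space M. H n \<omega> = v} \<omega>)"
      using det_repr[OF assms(1) om] by simp
    also have "\<dots> = (\<Sum>v\<in>V n. ennreal (X (rep v) * indicator {\<omega>\<in>space M. H n \<omega> = v} \<omega>))"
      by (rule sum_ennreal[symmetric]) (use nn in auto)
    also have "\<dots> = (\<Sum>v\<in>V n. ennreal (X (rep v)) * indicator {\<omega>\<in>space M. H n \<omega> = v} \<omega>)"
      by (rule sum.cong) (auto simp: indicator_def)
    finally show "ennreal (X \<omega>) = (\<Sum>v\<in>V n. ennreal (X (rep v)) * indicator {\<omega>\<in>space M. H n \<omega> = v} \<omega>)" .
  qed
  also have "\<dots> = (\<Sum>v\<in>V n. ennreal (X (rep v)) * emeasure M {\<omega>\<in>space M. H n \<omega> = v})"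
    using ev_H_sets by (simp add: nn_integral_sum nn_integral_cmult_indicator)
  also have "\<dots> = (\<Sum>v\<in>V n. ennreal (X (rep v) * (1 / real k) ^ n))"
  proof (rule sum.cong[OF refl])
    fix v assume v: "v \<in> V n"
    show "ennreal (X (rep v)) * emeasure M {\<omega>\<in>space M. H n \<omega> = v} = ennreal (X (rep v) * (1 / real k) ^ n)"
      using prob_H[OF v] nn[OF v] by (simp add: emeasure_eq_measure ennreal_mult)
  qed
  also have "\<dots> = ennreal (\<Sum>v\<in>V n. X (rep v) * (1 / real k) ^ n)"
    by (rule sum_ennreal) (use nn in auto)
  also have "(\<Sum>v\<in>V n. X (rep v) * (1 / real k) ^ n) = avg n X"
    unfolding avg_def by (simp add: sum_distrib_right[symmetric] power_one_over divide_inverse power_inverse)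
  finally show ?thesis .
qed

end



context bcd begin

lemma detnD: "detn n X \<Longrightarrow> \<omega> \<in> space M \<Longrightarrow> \<omega>' \<in> space M \<Longrightarrow> H n \<omega> = H n \<omega>' \<Longrightarrow> X \<omega> = X \<omega>'"
  unfolding detn_def by blast

lemma detnI: "(\<And>\<omega> \<omega>'. \<omega> \<in> space M \<Longrightarrow> \<omega>' \<in> space M \<Longrightarrow> H n \<omega> = H n \<omega>' \<Longrightarrow> X \<omega> = X \<omega>') \<Longrightarrow> detn n X"
  unfolding detn_def by blast

lemma H_Suc_eq: "H (Suc n) \<omega> = H (Suc n) \<omega>' \<Longrightarrow> H n \<omega> = H n \<omega>' \<and> I (Suc n) \<omega> = I (Suc n) \<omega>'"
  unfolding H_Suc by simp

lemma detn_Suc: "detn n X \<Longrightarrow> detn (Suc n) X"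
  by (rule detnI) (auto dest: H_Suc_eq detnD)

lemma detn_theta: "detn n (\<lambda>\<omega>. \<theta> n \<omega>)"
proof (rule detnI)
  fix \<omega> \<omega>' assume "\<omega> \<in> space M" "\<omega>' \<in> space M" "H n \<omega> = H n \<omega>'"
  then show "\<theta> n \<omega> = \<theta> n \<omega>'" using \<theta>_adapted unfolding H_eq_iff by blast
qed

lemma detn_eta: "detn (Suc n) (eta (Suc n))"
proof (rule detnI)
  fix \<omega> \<omega>' assume a: "\<omega> \<in> space M" "\<omega>' \<in> space M" "H (Suc n) \<omega> = H (Suc n) \<omega>'"
  have "\<theta> n \<omega> = \<theta> n \<omega>'" using detnD[OF detn_Suc[OF detn_theta] a] .
  moreover have "\<theta> (Suc n) \<omega> = \<theta> (Suc n) \<omega>'" using detnD[OF detn_theta a] .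
  ultimately show "eta (Suc n) \<omega> = eta (Suc n) \<omega>'" unfolding eta_def by simp
qed

lemma detn_Z: "detn n (Z j n)"
proof (induction n)
  case 0
  then show ?case by (rule detnI) simp
next
  case (Suc n)
  show ?case
  proof (rule detnI)
    fix \<omega> \<omega>' assume a: "\<omega> \<in> space M" "\<omega>' \<in> space M" "H (Suc n) \<omega> = H (Suc n) \<omega>'"
    have "Z j n \<omega> = Z j n \<omega>'" using detnD[OF detn_Suc[OF Suc.IH] a] .
    moreover have "eta (Suc n) \<omega> = eta (Suc n) \<omega>'" using detnD[OF detn_eta a] .
    moreover have "I (Suc n) \<omega> = I (Suc n) \<omega>'" using H_Suc_eq[OF a(3)] by simp
    ultimately show "Z j (Suc n) \<omega> = Z j (Suc n) \<omega>'" by simp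
  qed
qed

lemma detn_sq: "detn n X \<Longrightarrow> detn n (\<lambda>\<omega>. (X \<omega>)^2)"
  by (rule detnI) (auto dest: detnD)

lemma detn_f_theta: "detn n (\<lambda>\<omega>. f (\<theta> n \<omega>))"
  by (rule detnI) (auto dest: detnD[OF detn_theta])

end



context bcd begin

definition "qq = (1 + 1 / (2 * real k)) * ((real k - 1) / real k)"
definition "Cc = (1 + 2 * real k) * (4 * Lp)"

lemma qq_bounds: "0 \<le> qq" "qq < 1"
proof -
  have k: "real k \<ge> 1" using k_pos by simp
  show "0 \<le> qq" unfolding qq_def using k by auto
  have "qq = 1 - 1 / (2 * real k) - 1 / (2 * (real k)^2)"
    unfolding qq_def using k by (simp add: field_simps power2_eq_square)
  moreover have "0 < 1 / (2 * real k)" using k by simp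
  moreover have "0 < 1 / (2 * (real k)^2)" using k by simp
  ultimately show "qq < 1" by linarith
qed

lemma Z_sq_step:
  assumes om: "\<omega> \<in> space M"
  shows "(Z j (Suc n) \<omega>)^2 \<le> (if I (Suc n) \<omega> = j then 0 else (1 + 1 / (2 * real k)) * (Z j n \<omega>)^2)
           + Cc * eta (Suc n) \<omega>"
proof -
  have k: "real k \<ge> 1" using k_pos by simp
  define a where "a = sqrt (4 * Lp * eta (Suc n) \<omega>)"
  define z where "z = Z j n \<omega>"
  have e0: "0 \<le> eta (Suc n) \<omega>" using eta_nonneg[of "Suc n" \<omega>] om by simp
  have a2: "a^2 = 4 * Lp * eta (Suc n) \<omega>" unfolding a_def using e0 by simp
  have Cc2: "Cc * eta (Suc n) \<omega> = (1 + 2 * real k) * a^2" unfolding Cc_def a2 by simp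
  have a2n: "0 \<le> a^2" by simp
  show ?thesis
  proof (cases "I (Suc n) \<omega> = j")
    case True
    then have "(Z j (Suc n) \<omega>)^2 = a^2" unfolding a_def by simp
    then show ?thesis using True Cc2 a2n k by (simp add: algebra_simps)
  next
    case False
    then have Zs: "Z j (Suc n) \<omega> = z + a" unfolding a_def z_def by simp
    have sq: "0 \<le> (z - 2 * real k * a)^2" by simp
    have "2 * z * a \<le> z^2 / (2 * real k) + 2 * real k * a^2"
    proof -
      have "0 \<le> z^2 - 4 * real k * z * a + 4 * (real k)^2 * a^2"
        using sq by (simp add: power2_eq_square algebra_simps)
      then have "0 \<le> (z^2 - 4 * real k * z * a + 4 * (real k)^2 * a^2) / (2 * real k)"
        using k by simp
      also have "\<dots> = z^2 / (2 * real k) - 2 * z * a + 2 * real k * a^2"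
        using k by (simp add: field_simps power2_eq_square)
      finally show ?thesis by simp
    qed
    then have "(z + a)^2 \<le> (1 + 1 / (2 * real k)) * z^2 + (1 + 2 * real k) * a^2"
      by (simp add: power2_eq_square algebra_simps)
    then show ?thesis using False Zs Cc2 unfolding z_def by simp
  qed
qed

lemma S_rec:
  assumes j: "j < k"
  shows "avg (Suc n) (\<lambda>\<omega>. (Z j (Suc n) \<omega>)^2) \<le> qq * avg n (\<lambda>\<omega>. (Z j n \<omega>)^2)
     + Cc * (avg n (\<lambda>\<omega>. f (\<theta> n \<omega>)) - avg (Suc n) (\<lambda>\<omega>. f (\<theta> (Suc n) \<omega>)))"
proof -
  let ?X = "\<lambda>\<omega>. (1 + 1 / (2 * real k)) * (Z j n \<omega>)^2"
  have dX: "detn n ?X"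
  proof (rule detnI)
    fix \<omega> \<omega>' assume a: "\<omega> \<in> space M" "\<omega>' \<in> space M" "H n \<omega> = H n \<omega>'"
    show "?X \<omega> = ?X \<omega>'" using detnD[OF detn_Z a] by simp
  qed
  have "avg (Suc n) (\<lambda>\<omega>. (Z j (Suc n) \<omega>)^2)
      \<le> avg (Suc n) (\<lambda>\<omega>. (if I (Suc n) \<omega> = j then 0 else ?X \<omega>) + Cc * eta (Suc n) \<omega>)"
    by (rule avg_mono) (rule Z_sq_step)
  also have "\<dots> = avg (Suc n) (\<lambda>\<omega>. if I (Suc n) \<omega> = j then 0 else ?X \<omega>) + Cc * avg (Suc n) (eta (Suc n))"
    by (simp add: avg_add avg_cmult)
  also have "avg (Suc n) (\<lambda>\<omega>. if I (Suc n) \<omega> = j then 0 else ?X \<omega>) = (real k - 1) / real k * avg n ?X"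
    by (rule avg_Suc_sel[OF dX j])
  also have "avg n ?X = (1 + 1 / (2 * real k)) * avg n (\<lambda>\<omega>. (Z j n \<omega>)^2)" by (rule avg_cmult)
  also have "avg (Suc n) (eta (Suc n)) = avg n (\<lambda>\<omega>. f (\<theta> n \<omega>)) - avg (Suc n) (\<lambda>\<omega>. f (\<theta> (Suc n) \<omega>))"
  proof -
    have "avg (Suc n) (eta (Suc n)) = avg (Suc n) (\<lambda>\<omega>. f (\<theta> n \<omega>) - f (\<theta> (Suc n) \<omega>))"
      unfolding eta_def by simp
    also have "\<dots> = avg (Suc n) (\<lambda>\<omega>. f (\<theta> n \<omega>)) - avg (Suc n) (\<lambda>\<omega>. f (\<theta> (Suc n) \<omega>))"
      by (rule avg_diff)
    also have "avg (Suc n) (\<lambda>\<omega>. f (\<theta> n \<omega>)) = avg n (\<lambda>\<omega>. f (\<theta> n \<omega>))"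
      by (rule avg_Suc[OF detn_f_theta])
    finally show ?thesis .
  qed
  finally show ?thesis unfolding qq_def by (simp add: mult_ac)
qed

end



context bcd begin

lemma S_bound:
  assumes j: "j < k"
  shows "\<exists>B. \<forall>N. (\<Sum>n<N. avg (Suc n) (\<lambda>\<omega>. (Z j (Suc n) \<omega>)^2)) \<le> B"
proof -
  define S where "S n = avg n (\<lambda>\<omega>. (Z j n \<omega>)^2)" for n
  define E where "E n = avg n (\<lambda>\<omega>. f (\<theta> n \<omega>))" for n
  obtain lb where lb: "\<And>x. lb \<le> f x" using f_bdd unfolding bdd_below_def by auto
  have Sn: "0 \<le> S n" for n
  proof -
    have "avg n (\<lambda>\<omega>. 0) \<le> S n" unfolding S_def by (rule avg_mono) simp
    then show ?thesis by (simp add: avg_const)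
  qed
  have E0: "E 0 = f \<theta>0"
  proof -
    have "E 0 = avg 0 (\<lambda>\<omega>. f \<theta>0)" unfolding E_def by (rule avg_cong) (simp add: start)
    then show ?thesis by (simp add: avg_const)
  qed
  have En: "lb \<le> E n" for n
  proof -
    have "avg n (\<lambda>\<omega>. lb) \<le> E n" unfolding E_def by (rule avg_mono) (rule lb)
    then show ?thesis by (simp add: avg_const)
  qed
  have rec: "S (Suc n) \<le> qq * S n + Cc * (E n - E (Suc n))" for n
    unfolding S_def E_def by (rule S_rec[OF j])
  have Cc0: "0 \<le> Cc" unfolding Cc_def by simp
  define B where "B = (qq * S 0 + Cc * (f \<theta>0 - lb)) / (1 - qq)"
  have "(\<Sum>n<N. S (Suc n)) \<le> B" for N
  proof -
    define T where "T = (\<Sum>n<N. S (Suc n))"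
    have "T \<le> (\<Sum>n<N. qq * S n + Cc * (E n - E (Suc n)))"
      unfolding T_def by (rule sum_mono) (rule rec)
    also have "\<dots> = qq * (\<Sum>n<N. S n) + Cc * (E 0 - E N)"
      by (simp add: sum.distrib sum_distrib_left[symmetric] sum_lessThan_telescope')
    finally have T1: "T \<le> qq * (\<Sum>n<N. S n) + Cc * (E 0 - E N)" .
    have "(\<Sum>n<N. S n) \<le> S 0 + T"
    proof -
      have "(\<Sum>n<N. S n) \<le> (\<Sum>n<Suc N. S n)" using Sn by (simp add: sum.lessThan_Suc)
      also have "\<dots> = S 0 + T" unfolding T_def by (rule sum.lessThan_Suc_shift)
      finally show ?thesis .
    qed
    then have "qq * (\<Sum>n<N. S n) \<le> qq * (S 0 + T)" using qq_bounds by (intro mult_left_mono) auto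
    moreover have "Cc * (E 0 - E N) \<le> Cc * (f \<theta>0 - lb)" using Cc0 E0 En[of N] by (intro mult_left_mono) auto
    ultimately have "T \<le> qq * (S 0 + T) + Cc * (f \<theta>0 - lb)"
      using T1 by linarith
    then have "(1 - qq) * T \<le> qq * S 0 + Cc * (f \<theta>0 - lb)" by (simp add: algebra_simps)
    then show ?thesis unfolding B_def T_def[symmetric] using qq_bounds by (simp add: field_simps)
  qed
  then show ?thesis unfolding S_def by blast
qed

lemma Z_AE:
  assumes j: "j < k"
  shows "AE \<omega> in M. (\<lambda>n. Z j n \<omega>) \<longlonglongrightarrow> 0"
proof -
  obtain B where B: "\<And>N. (\<Sum>n<N. avg (Suc n) (\<lambda>\<omega>. (Z j (Suc n) \<omega>)^2)) \<le> B"
    using S_bound[OF j] by blast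
  define X where "X n \<omega> = (Z j (Suc n) \<omega>)^2" for n \<omega>
  have dX: "detn (Suc n) (X n)" for n unfolding X_def[abs_def] by (rule detn_sq[OF detn_Z])
  have mX: "(\<lambda>\<omega>. ennreal (X n \<omega>)) \<in> borel_measurable M" for n
    using det_meas[OF dX] by measurable
  have nnX: "(\<integral>\<^sup>+\<omega>. ennreal (X n \<omega>) \<partial>M) = ennreal (avg (Suc n) (X n))" for n
    by (rule det_nn[OF dX]) (simp add: X_def)
  have an: "0 \<le> avg (Suc n) (X n)" for n
  proof -
    have "avg (Suc n) (\<lambda>\<omega>. 0) \<le> avg (Suc n) (X n)" by (rule avg_mono) (simp add: X_def)
    then show ?thesis by (simp add: avg_const)
  qed
  have B': "(\<Sum>n<N. avg (Suc n) (X n)) \<le> B" for N unfolding X_def by (rule B)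
  have summ: "summable (\<lambda>n. avg (Suc n) (X n))"
    by (rule summableI_nonneg_bounded[where x=B, OF an B'])
  have "(\<integral>\<^sup>+\<omega>. (\<Sum>n. ennreal (X n \<omega>)) \<partial>M) = (\<Sum>n. (\<integral>\<^sup>+\<omega>. ennreal (X n \<omega>) \<partial>M))"
    by (rule nn_integral_suminf) (rule mX)
  also have "\<dots> = (\<Sum>n. ennreal (avg (Suc n) (X n)))" unfolding nnX ..
  also have "\<dots> = ennreal (\<Sum>n. avg (Suc n) (X n))" by (rule suminf_ennreal2[OF an summ])
  finally have fin: "(\<integral>\<^sup>+\<omega>. (\<Sum>n. ennreal (X n \<omega>)) \<partial>M) \<noteq> \<infinity>" by simp
  have "AE \<omega> in M. (\<Sum>n. ennreal (X n \<omega>)) \<noteq> \<infinity>"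
    by (rule nn_integral_PInf_AE[OF _ fin]) (use mX in measurable)
  then show ?thesis
  proof (rule AE_mp, intro AE_I2 impI)
    fix \<omega> assume om: "\<omega> \<in> space M" and s: "(\<Sum>n. ennreal (X n \<omega>)) \<noteq> \<infinity>"
    have "summable (\<lambda>n. X n \<omega>)"
      by (rule summable_suminf_not_top) (use s in \<open>auto simp: X_def\<close>)
    then have "(\<lambda>n. X n \<omega>) \<longlonglongrightarrow> 0" by (rule summable_LIMSEQ_zero)
    then have "(\<lambda>n. sqrt (X n \<omega>)) \<longlonglongrightarrow> sqrt 0" by (rule tendsto_real_sqrt)
    moreover have "sqrt (X n \<omega>) = Z j (Suc n) \<omega>" for n
      unfolding X_def using Z_nonneg[OF om, of j "Suc n"] by (simp del: Z.simps)
    ultimately have "(\<lambda>n. Z j (Suc n) \<omega>) \<longlonglongrightarrow> 0" by simp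
    then show "(\<lambda>n. Z j n \<omega>) \<longlonglongrightarrow> 0"
      using filterlim_sequentially_Suc[of "\<lambda>n. Z j n \<omega>" "nhds 0"] by (simp del: Z.simps)
  qed
qed

end



context bcd begin

lemma main:
  "AE \<omega> in M. antimono (\<lambda>n. f (\<theta> n \<omega>)) \<and>
           liminf (\<lambda>n. INF y\<in>blk_product blk k Th - {\<theta> n \<omega>}.
                    ereal (dir_deriv f (\<theta> n \<omega>) (y - \<theta> n \<omega>) / norm (y - \<theta> n \<omega>))) \<ge> 0"
proof -
  have "AE \<omega> in M. \<forall>j\<in>{..<k}. (\<lambda>n. Z j n \<omega>) \<longlonglongrightarrow> 0"
    by (rule AE_finite_allI) (auto intro: Z_AE)
  then show ?thesis
  proof (rule AE_mp, intro AE_I2 impI)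
    fix \<omega> assume om: "\<omega> \<in> space M" and conv: "\<forall>j\<in>{..<k}. (\<lambda>n. Z j n \<omega>) \<longlonglongrightarrow> 0"
    have mono: "antimono (\<lambda>n. f (\<theta> n \<omega>))"
    proof (rule decseq_SucI)
      fix n show "f (\<theta> (Suc n) \<omega>) \<le> f (\<theta> n \<omega>)" using f_step(1)[of "Suc n" \<omega>] om by simp
    qed
    define W where "W n = (\<Sum>j<k. Z j n \<omega>)" for n
    have W0: "W \<longlonglongrightarrow> 0"
    proof -
      have "(\<lambda>n. \<Sum>j<k. Z j n \<omega>) \<longlonglongrightarrow> (\<Sum>j<k. 0)"
        by (rule tendsto_sum) (use conv in auto)
      then show ?thesis unfolding W_def[abs_def] by simp
    qed
    have lb: "ereal (- W n) \<le> (INF y\<in>blk_product blk k Th - {\<theta> n \<omega>}.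
                    ereal (dir_deriv f (\<theta> n \<omega>) (y - \<theta> n \<omega>) / norm (y - \<theta> n \<omega>)))" for n
    proof (rule INF_greatest)
      fix y assume y: "y \<in> blk_product blk k Th - {\<theta> n \<omega>}"
      then have np: "0 < norm (y - \<theta> n \<omega>)" by auto
      have "- W n * norm (y - \<theta> n \<omega>) \<le> dir_deriv f (\<theta> n \<omega>) (y - \<theta> n \<omega>)"
        unfolding W_def using dd_bound[OF om, of y n] y by simp
      then have "- W n \<le> dir_deriv f (\<theta> n \<omega>) (y - \<theta> n \<omega>) / norm (y - \<theta> n \<omega>)"
        using np by (simp add: pos_le_divide_eq)
      then show "ereal (- W n) \<le> ereal (dir_deriv f (\<theta> n \<omega>) (y - \<theta> n \<omega>) / norm (y - \<theta> n \<omega>))"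
        by simp
    qed
    have "liminf (\<lambda>n. ereal (- W n)) = ereal (- 0)"
    proof (rule lim_imp_Liminf)
      show "(\<lambda>n. ereal (- W n)) \<longlonglongrightarrow> ereal (- 0)"
        unfolding lim_ereal by (intro tendsto_minus W0)
    qed simp
    moreover have "liminf (\<lambda>n. ereal (- W n)) \<le> liminf (\<lambda>n. INF y\<in>blk_product blk k Th - {\<theta> n \<omega>}.
                    ereal (dir_deriv f (\<theta> n \<omega>) (y - \<theta> n \<omega>) / norm (y - \<theta> n \<omega>)))"
      by (rule Liminf_mono) (use lb in auto)
    ultimately show "antimono (\<lambda>n. f (\<theta> n \<omega>)) \<and>
           liminf (\<lambda>n. INF y\<in>blk_product blk k Th - {\<theta> n \<omega>}.
                    ereal (dir_deriv f (\<theta> n \<omega>) (y - \<theta> n \<omega>) / norm (y - \<theta> n \<omega>))) \<ge> 0"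
      using mono by (simp add: zero_ereal_def)
  qed
qed

end

theorem proposition3p1:
  fixes blk :: "'n::finite \<Rightarrow> nat" and k :: nat
    and Th :: "nat \<Rightarrow> (real^'n) set"
    and f :: "real^'n \<Rightarrow> real" and L :: real
    and M :: "'w measure" and I :: "nat \<Rightarrow> 'w \<Rightarrow> nat"
    and \<theta> :: "nat \<Rightarrow> 'w \<Rightarrow> real^'n" and \<theta>0 :: "real^'n"
    and gs :: "nat \<Rightarrow> 'w \<Rightarrow> nat \<Rightarrow> real^'n \<Rightarrow> real"
  assumes blocks: "range blk = {..<k}"
    and blocks_sub: "\<forall>i<k. Th i \<subseteq> {x. \<forall>j. blk j \<noteq> i \<longrightarrow> x $ j = 0}"
    and blocks_convex: "\<forall>i<k. convex (Th i)"
    and f_cont: "continuous_on UNIV f"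
    and f_bdd: "bdd_below (range f)"
    and f_dd: "\<forall>x\<in>blk_product blk k Th. \<forall>y\<in>blk_product blk k Th. dir_deriv_exists f x (y - x)"
    and P: "prob_space M"
    and I_indep: "prob_space.indep_vars M (\<lambda>_. count_space UNIV) I {1..}"
    and I_range: "\<forall>n\<ge>1. \<forall>\<omega>\<in>space M. I n \<omega> < k"
    and I_unif: "\<forall>n\<ge>1. \<forall>i<k. measure M {\<omega>\<in>space M. I n \<omega> = i} = 1 / real k"
    and init: "\<exists>\<theta>m\<in>blk_product blk k Th. \<exists>g. separable blk k g \<and> majorant f g \<and>
                 first_order_surrogate L f (blk_product blk k Th) \<theta>m g \<and>
                 \<theta>0 \<in> arg_min_set g (blk_product blk k Th)"
    and start: "\<forall>\<omega>\<in>space M. \<theta> 0 \<omega> = \<theta>0"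
    and surr: "\<forall>n\<ge>1. \<forall>\<omega>\<in>space M.
                 majorant f (\<lambda>x. \<Sum>i<k. gs n \<omega> i (blk_proj blk i x)) \<and>
                 first_order_surrogate L f (blk_product blk k Th) (\<theta> (n - 1) \<omega>)
                   (\<lambda>x. \<Sum>i<k. gs n \<omega> i (blk_proj blk i x))"
    and upd_keep: "\<forall>n\<ge>1. \<forall>\<omega>\<in>space M. \<forall>j. blk j \<noteq> I n \<omega> \<longrightarrow> \<theta> n \<omega> $ j = \<theta> (n - 1) \<omega> $ j"
    and upd_min: "\<forall>n\<ge>1. \<forall>\<omega>\<in>space M.
                 blk_proj blk (I n \<omega>) (\<theta> n \<omega>) \<in> arg_min_set (gs n \<omega> (I n \<omega>)) (Th (I n \<omega>))"
    and gs_adapted: "\<forall>n\<ge>1. \<forall>\<omega>\<in>space M. \<forall>\<omega>'\<in>space M.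
                 (\<forall>m\<in>{1..<n}. I m \<omega> = I m \<omega>') \<longrightarrow> gs n \<omega> = gs n \<omega>'"
    and \<theta>_adapted: "\<forall>n. \<forall>\<omega>\<in>space M. \<forall>\<omega>'\<in>space M.
                 (\<forall>m\<in>{1..n}. I m \<omega> = I m \<omega>') \<longrightarrow> \<theta> n \<omega> = \<theta> n \<omega>'"
  shows "AE \<omega> in M. antimono (\<lambda>n. f (\<theta> n \<omega>)) \<and>
           liminf (\<lambda>n. INF y\<in>blk_product blk k Th - {\<theta> n \<omega>}.
                    ereal (dir_deriv f (\<theta> n \<omega>) (y - \<theta> n \<omega>) / norm (y - \<theta> n \<omega>))) \<ge> 0"
proof -
  interpret bcd blk k Th f L M I \<theta> \<theta>0 gs
    by (intro bcd.intro assms)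
  show ?thesis by (rule main)
qed

end
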